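(* Assume $f$ satisfies Hypothesis 2 (see context) and let $\xi,\xi_\eta$ be as defined in the context. Then for each $\eta\in(0,1]$ and all $s\in(0,+\infty)$: \[ |\xi_\eta(s)|\le|\xi(s)|,\qquad |\xi_\eta'(s)|\le\frac{|\xi(s)|}{s}+\frac{1}{s^2f''(s)}+\frac{2\eta|\xi(s)|}{s^2f''(s)}, \] \[ |\xi_\eta''(s)f''(s)s^2|\le2\eta|\xi_\eta'(s)|+(1+2\eta|\xi(s)|)\,\big|(\log(f''(s)s))'\big|. \]
   Context: Hypothesis 2 on $f\colon(0,\infty)\to\mathbb{R}$: (I1) $f\in C^{4,\beta}_{loc}(0,\infty)$ for some $\beta\in(0,1]$, $f''>0$; (I2) $\frac{1}{\alpha\kappa}s^\alpha\le s^2f''(s)$ for $s>0$, with $\alpha\in(0,1)$, $\kappa>0$; (I3) $|sf'''(s)/f''(s)|\le\kappa$ for $s>0$; (I4) there is $\mathcal{K}_{\inf}>0$ with $\int_\Omega f(\mu)\,dx>-\mathcal{K}_{\inf}$ for all $\mu\in\mathscr{P}^{ac}(\Omega)$, $\Omega=(0,L)$. Define $\xi(s)=-s\int_s^\infty\frac{dy}{y^3f''(y)}$ and, for $\eta\in(0,1]$, $\xi_\eta(s)=-s\exp\!\big(\int_0^s\frac{2\eta}{y^2f''(y)}dy\big)\int_s^\infty\exp\!\big(-\int_0^y\frac{2\eta}{z^2f''(z)}dz\big)\frac{dy}{y^3f''(y)}$. *)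

theory Defs
  imports "HOL-Analysis.Analysis"
begin

abbreviation dk :: "nat \<Rightarrow> (real \<Rightarrow> real) \<Rightarrow> real \<Rightarrow> real" where
  "dk k f \<equiv> (deriv ^^ k) f"

definition C4beta_loc :: "real \<Rightarrow> (real \<Rightarrow> real) \<Rightarrow> bool" where
  "C4beta_loc \<beta> f \<longleftrightarrow>
     (\<forall>k<4. \<forall>s>0. (dk k f has_real_derivative dk (Suc k) f s) (at s)) \<and>
     (\<forall>K. compact K \<and> K \<subseteq> {0<..} \<longrightarrow>
        (\<exists>C. \<forall>x\<in>K. \<forall>y\<in>K. \<bar>dk 4 f x - dk 4 f y\<bar> \<le> C * \<bar>x - y\<bar> powr \<beta>))"

text \<open>Hypothesis 2, with parameters alpha, beta, kappa, K_inf and Omega = (0,L).\<close>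
definition hypothesis2 ::
  "(real \<Rightarrow> real) \<Rightarrow> real \<Rightarrow> real \<Rightarrow> real \<Rightarrow> real \<Rightarrow> real \<Rightarrow> bool" where
  "hypothesis2 f \<alpha> \<beta> \<kappa> Kinf L \<longleftrightarrow>
     0 < \<beta> \<and> \<beta> \<le> 1 \<and> 0 < \<alpha> \<and> \<alpha> < 1 \<and> 0 < \<kappa> \<and> 0 < Kinf \<and> 0 < L \<and>
     C4beta_loc \<beta> f \<and> (\<forall>s>0. dk 2 f s > 0) \<and>
     (\<forall>s>0. s powr \<alpha> / (\<alpha> * \<kappa>) \<le> s\<^sup>2 * dk 2 f s) \<and>
     (\<forall>s>0. \<bar>s * dk 3 f s / dk 2 f s\<bar> \<le> \<kappa>) \<and>
     (\<forall>\<rho>. \<rho> \<in> borel_measurable lborel \<and> (\<forall>x\<in>{0<..<L}. 0 < \<rho> x) \<and>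
          set_integrable lborel {0<..<L} \<rho> \<and> (LINT x:{0<..<L}|lborel. \<rho> x) = 1 \<and>
          set_integrable lborel {0<..<L} (\<lambda>x. f (\<rho> x))
          \<longrightarrow> (LINT x:{0<..<L}|lborel. f (\<rho> x)) > - Kinf)"

definition xi :: "(real \<Rightarrow> real) \<Rightarrow> real \<Rightarrow> real" where
  "xi f s = - s * integral {s..} (\<lambda>y. 1 / (y ^ 3 * dk 2 f y))"

definition xi_eta :: "(real \<Rightarrow> real) \<Rightarrow> real \<Rightarrow> real \<Rightarrow> real" where
  "xi_eta f \<eta> s =
     - s * exp (integral {0..s} (\<lambda>y. 2 * \<eta> / (y\<^sup>2 * dk 2 f y)))
       * integral {s..} (\<lambda>y. exp (- integral {0..y} (\<lambda>z. 2 * \<eta> / (z\<^sup>2 * dk 2 f z)))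
                              / (y ^ 3 * dk 2 f y))"

end

theory Submission
  imports Defs
begin

lemma tail_integrable:
  fixes k :: "real \<Rightarrow> real"
  assumes c: "c > 0" and a: "a > 0" and M: "M \<ge> 0"
    and cont: "continuous_on {c..} k"
    and bnd: "\<And>y. y \<ge> c \<Longrightarrow> \<bar>k y\<bar> \<le> M * y powr (-1-a)"
  shows "k integrable_on {c..}"
proof (rule measurable_bounded_by_integrable_imp_integrable_real)
  show "k \<in> borel_measurable (lebesgue_on {c..})"
    by (rule continuous_imp_measurable_on_sets_lebesgue[OF cont]) simp
  have "(\<lambda>y. y powr (-1-a)) integrable_on {c..}"
    using has_integral_powr_to_inf[of "-1-a" c] a c unfolding integrable_on_def by auto
  then show "(\<lambda>y. M * y powr (-1-a)) integrable_on {c..}"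
    by (rule integrable_on_mult_right)
qed (use bnd in auto)

lemma head_integrable:
  fixes k :: "real \<Rightarrow> real"
  assumes s: "s > 0" and a: "a < 1" and M: "M \<ge> 0"
    and cont: "continuous_on {0<..s} k"
    and bnd: "\<And>y. 0 < y \<Longrightarrow> y \<le> s \<Longrightarrow> \<bar>k y\<bar> \<le> M * y powr (-a)"
  shows "k integrable_on {0..s}"
proof -
  have "k integrable_on {0<..s}"
  proof (rule measurable_bounded_by_integrable_imp_integrable_real)
    show "k \<in> borel_measurable (lebesgue_on {0<..s})"
      by (rule continuous_imp_measurable_on_sets_lebesgue[OF cont]) simp
    have "(\<lambda>y. y powr (-a)) integrable_on {0<..s}"
      using integrable_on_powr_from_0'[of "-a" s] a s by auto
    then show "(\<lambda>y. M * y powr (-a)) integrable_on {0<..s}"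
      by (rule integrable_on_mult_right)
  qed (use bnd in auto)
  then show ?thesis
    by (rule integrable_spike_set) (auto intro: negligible_subset[of "{0}"])
qed

lemma deriv_from_integral:
  fixes k F :: "real \<Rightarrow> real"
  assumes ct: "c < t" "t < b" and cont: "continuous_on {c..b} k"
    and eq: "\<And>u. u \<in> {c<..<b} \<Longrightarrow> F u = A + B * integral {c..u} k"
  shows "(F has_real_derivative B * k t) (at t)"
proof -
  have "((\<lambda>x. integral {c..x} k) has_real_derivative k t) (at t within {c..b})"
    using integral_has_real_derivative[OF cont] ct by auto
  moreover have "at t within {c..b} = at t"
    using ct by (intro at_within_interior) auto
  ultimately have "((\<lambda>x. integral {c..x} k) has_real_derivative k t) (at t)" by simp
  then have "((\<lambda>x. A + B * integral {c..x} k) has_real_derivative B * k t) (at t)"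
    by (auto intro!: derivative_eq_intros)
  then show ?thesis
    by (rule has_field_derivative_transform_within_open[where S="{c<..<b}"]) (use ct eq in auto)
qed


lemma ddx_generic:
  fixes x d :: "real \<Rightarrow> real"
  assumes X: "(x has_real_derivative x') (at s)" and D: "(d has_real_derivative d') (at s)" and s: "s \<noteq> 0" and ds: "d s \<noteq> 0"
  shows "((\<lambda>t. x t / t + 2 * \<eta>/(t\<^sup>2 * d t) * x t + 1/(t\<^sup>2 * d t)) has_real_derivative
     (x' * s - x s) / (s * s) + 2 * \<eta> * (-(2 * s * d s + s\<^sup>2 * d') / ((s\<^sup>2 * d s) * (s\<^sup>2 * d s))) * x s + 2 * \<eta>/(s\<^sup>2 * d s) * x'
      + (-(2 * s * d s + s\<^sup>2 * d') / ((s\<^sup>2 * d s) * (s\<^sup>2 * d s)))) (at s)"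
proof -
  have den: "((\<lambda>t. t\<^sup>2 * d t) has_real_derivative 2 * s * d s + s\<^sup>2 * d') (at s)"
    using DERIV_mult[OF DERIV_pow[of 2 s] D] by (simp add: algebra_simps)
  have dn: "s\<^sup>2 * d s \<noteq> 0" using s ds by simp
  have q: "((\<lambda>t. 1/(t\<^sup>2 * d t)) has_real_derivative -(2 * s * d s + s\<^sup>2 * d') / ((s\<^sup>2 * d s) * (s\<^sup>2 * d s))) (at s)"
    using DERIV_divide[OF DERIV_const[of 1] den dn] by simp
  have q2: "((\<lambda>t. 2 * \<eta>/(t\<^sup>2 * d t)) has_real_derivative 2 * \<eta> * (-(2 * s * d s + s\<^sup>2 * d') / ((s\<^sup>2 * d s) * (s\<^sup>2 * d s)))) (at s)"
    using DERIV_cmult[OF q, of "2 * \<eta>"] by simp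
  have a: "((\<lambda>t. x t / t) has_real_derivative (x' * s - x s) / (s * s)) (at s)"
    using DERIV_divide[OF X DERIV_ident s] by simp
  have b: "((\<lambda>t. 2 * \<eta>/(t\<^sup>2 * d t) * x t) has_real_derivative 2 * \<eta> * (-(2 * s * d s + s\<^sup>2 * d') / ((s\<^sup>2 * d s) * (s\<^sup>2 * d s))) * x s + 2 * \<eta>/(s\<^sup>2 * d s) * x') (at s)"
    using DERIV_mult'[OF q2 X] by (simp add: algebra_simps)
  show ?thesis using DERIV_add[OF DERIV_add[OF a b] q] by (simp add: add.assoc)
qed
lemma E_identity:
  fixes x x' d d' s \<eta> :: real
  assumes s: "s \<noteq> 0" and ds: "d \<noteq> 0" and xx: "x' = x / s + 2 * \<eta> / (s\<^sup>2 * d) * x + 1 / (s\<^sup>2 * d)"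
  shows "(x' * s - x) / (s * s) + 2 * \<eta> * (-(2 * s * d + s\<^sup>2 * d') / ((s\<^sup>2 * d) * (s\<^sup>2 * d))) * x + 2 * \<eta>/(s\<^sup>2 * d) * x'
      + (-(2 * s * d + s\<^sup>2 * d') / ((s\<^sup>2 * d) * (s\<^sup>2 * d)))
    = (2 * \<eta> * x' - (1 + 2 * \<eta> * x) * ((d' * s + d) / (d * s))) / (d * s\<^sup>2)"
proof -
  have A1: "x' * s - x = (2 * \<eta> / (s\<^sup>2 * d) * x + 1 / (s\<^sup>2 * d)) * s"
  proof -
    have "x' * s = (x / s) * s + (2 * \<eta> / (s\<^sup>2 * d) * x + 1 / (s\<^sup>2 * d)) * s"
      unfolding xx by (simp add: distrib_right)
    moreover have "(x / s) * s = x" using s by simp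
    ultimately show ?thesis by simp
  qed
  have A2: "((2 * \<eta> / (s\<^sup>2 * d) * x + 1 / (s\<^sup>2 * d)) * s) / (s * s) = (2 * \<eta> * x + 1) / (s^3 * d)"
    using s ds by (simp add: field_simps power2_eq_square power3_eq_cube)
  have "(x' * s - x) / (s * s) + 2 * \<eta> * (-(2 * s * d + s\<^sup>2 * d') / ((s\<^sup>2 * d) * (s\<^sup>2 * d))) * x + 2 * \<eta>/(s\<^sup>2 * d) * x'
      + (-(2 * s * d + s\<^sup>2 * d') / ((s\<^sup>2 * d) * (s\<^sup>2 * d)))
    = (2 * \<eta> * x + 1) / (s^3 * d) + 2 * \<eta> * (-(2 * s * d + s\<^sup>2 * d') / ((s\<^sup>2 * d) * (s\<^sup>2 * d))) * x + 2 * \<eta>/(s\<^sup>2 * d) * x'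
      + (-(2 * s * d + s\<^sup>2 * d') / ((s\<^sup>2 * d) * (s\<^sup>2 * d)))"
    by (simp only: A1 A2)
  also have "\<dots> = (2 * \<eta> * x' - (1 + 2 * \<eta> * x) * ((d' * s + d) / (d * s))) / (d * s\<^sup>2)"
    using s ds by (simp add: field_simps power2_eq_square power3_eq_cube)
  finally show ?thesis .
qed

lemma main_lemma:
  fixes d2 d3 :: "real \<Rightarrow> real" and \<eta> s a M :: real
  assumes D2: "\<And>t. t > 0 \<Longrightarrow> (d2 has_real_derivative d3 t) (at t)"
    and pos: "\<And>t. t > 0 \<Longrightarrow> d2 t > 0"
    and bnd: "\<And>t. t > 0 \<Longrightarrow> 1 / (t^2 * d2 t) \<le> M * t powr (-a)"
    and a: "0 < a" "a < 1" and M: "M \<ge> 0" and eta: "0 < \<eta>" and s: "0 < s"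
  defines "h \<equiv> \<lambda>y. 2 * \<eta> / (y\<^sup>2 * d2 y)"
  defines "G \<equiv> \<lambda>t. integral {0..t} h"
  defines "K \<equiv> \<lambda>y. exp (- G y) / (y ^ 3 * d2 y)"
  defines "Xe \<equiv> \<lambda>s. - s * exp (G s) * integral {s..} K"
  defines "g3 \<equiv> \<lambda>y. 1 / (y ^ 3 * d2 y)"
  defines "X \<equiv> \<lambda>s. - s * integral {s..} g3"
  shows "Xe differentiable (at s) \<and> deriv Xe differentiable (at s) \<and>
         \<bar>Xe s\<bar> \<le> \<bar>X s\<bar> \<and>
         \<bar>deriv Xe s\<bar> \<le> \<bar>X s\<bar> / s + 1 / (s\<^sup>2 * d2 s) + 2 * \<eta> * \<bar>X s\<bar> / (s\<^sup>2 * d2 s) \<and>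
         \<bar>deriv (deriv Xe) s * d2 s * s\<^sup>2\<bar>
           \<le> 2 * \<eta> * \<bar>deriv Xe s\<bar> + (1 + 2 * \<eta> * \<bar>X s\<bar>) * \<bar>deriv (\<lambda>t. ln (d2 t * t)) s\<bar>"
proof -
  have cd2: "\<And>t. t > 0 \<Longrightarrow> isCont d2 t" using D2 DERIV_isCont by blast
  have d2nz: "\<And>t. t > 0 \<Longrightarrow> d2 t \<noteq> 0" using pos by (metis less_irrefl)
  have hpos: "\<And>y. y \<ge> 0 \<Longrightarrow> h y \<ge> 0"
  proof -
    fix y :: real assume y: "y \<ge> 0"
    show "h y \<ge> 0"
    proof (cases "y = 0")
      case True then show ?thesis by (simp add: h_def)
    next
      case False
      then have "0 < y\<^sup>2 * d2 y" using y pos[of y] by simp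
      then show ?thesis using eta by (simp add: h_def)
    qed
  qed
  have hcont: "\<And>y. y > 0 \<Longrightarrow> isCont h y"
  proof -
    fix y :: real assume y: "y > 0"
    have "continuous (at y) (\<lambda>y. 2 * \<eta> / (y\<^sup>2 * d2 y))"
      using cd2[OF y] d2nz[OF y] y by (intro continuous_intros) auto
    then show "isCont h y" by (simp add: h_def)
  qed
  have hbnd: "\<And>y. 0 < y \<Longrightarrow> \<bar>h y\<bar> \<le> (2 * \<eta> * M) * y powr (-a)"
  proof -
    fix y :: real assume y: "0 < y"
    have "\<bar>h y\<bar> = 2 * \<eta> * (1 / (y^2 * d2 y))"
      unfolding h_def using y pos[OF y] eta by simp
    also have "\<dots> \<le> 2 * \<eta> * (M * y powr (-a))"
      using mult_left_mono[OF bnd[OF y], of "2*\<eta>"] eta by simp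
    finally show "\<bar>h y\<bar> \<le> (2 * \<eta> * M) * y powr (-a)" by simp
  qed
  have hint: "\<And>t. t > 0 \<Longrightarrow> h integrable_on {0..t}"
  proof -
    fix t :: real assume t: "t > 0"
    show "h integrable_on {0..t}"
    proof (rule head_integrable[where a=a and M="2*\<eta>*M"])
      show "continuous_on {0<..t} h" using hcont by (intro continuous_at_imp_continuous_on) simp
      fix y assume "0 < y" "y \<le> t" then show "\<bar>h y\<bar> \<le> 2*\<eta>*M * y powr (-a)" using hbnd by blast
    qed (use t a M eta in auto)
  qed
  have Gd: "\<And>t. t > 0 \<Longrightarrow> (G has_real_derivative h t) (at t)"
  proof -
    fix t :: real assume t: "t > 0"
    have "(G has_real_derivative 1 * h t) (at t)"
    proof (rule deriv_from_integral[where c="t/2" and b="2*t" and A="G (t/2)"])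
      show "continuous_on {t/2..2*t} h"
        using t hcont by (intro continuous_at_imp_continuous_on) auto
      fix u assume u: "u \<in> {t/2<..<2*t}"
      have u0: "0 < u" "t/2 \<le> u" using u t by auto
      have c: "integral {0..t/2} h + integral {t/2..u} h = integral {0..u} h"
        by (rule Henstock_Kurzweil_Integration.integral_combine) (use t u0 hint[OF u0(1)] in auto)
      show "G u = G (t/2) + 1 * integral {t/2..u} h"
        by (simp add: G_def c[symmetric])
    qed (use t in auto)
    then show "(G has_real_derivative h t) (at t)" by simp
  qed
  have Gcont: "\<And>t. t > 0 \<Longrightarrow> isCont G t" using Gd DERIV_isCont by blast
  have Gmono: "\<And>t y. 0 < t \<Longrightarrow> t \<le> y \<Longrightarrow> G t \<le> G y"
  proof -
    fix t y :: real assume ty: "0 < t" "t \<le> y"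
    have c: "integral {0..t} h + integral {t..y} h = integral {0..y} h"
      by (rule Henstock_Kurzweil_Integration.integral_combine) (use ty hint[of y] in auto)
    have "G y = G t + integral {t..y} h"
      by (simp add: G_def c[symmetric])
    moreover have "integral {t..y} h \<ge> 0"
      using ty hpos by (intro integral_nonneg integrable_subinterval_real[OF hint[of y]]) auto
    ultimately show "G t \<le> G y" by simp
  qed
  have Gnn: "\<And>t. 0 < t \<Longrightarrow> G t \<ge> 0"
    unfolding G_def using hint hpos by (intro integral_nonneg) auto
  have g3bnd: "\<And>y. 0 < y \<Longrightarrow> g3 y \<le> M * y powr (-1-a)"
  proof -
    fix y :: real assume y: "0 < y"
    have "g3 y = (1 / (y^2 * d2 y)) / y" unfolding g3_def by (simp add: power_def field_simps)
    also have "\<dots> \<le> (M * y powr (-a)) / y" by (rule divide_right_mono[OF bnd[OF y]]) (use y in simp)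
    also have "\<dots> = M * y powr (-1-a)" using y by (simp add: powr_diff powr_minus field_simps)
    finally show "g3 y \<le> M * y powr (-1-a)" .
  qed
  have g3pos: "\<And>y. 0 < y \<Longrightarrow> g3 y > 0" unfolding g3_def using pos by simp
  have Kle: "\<And>y. 0 < y \<Longrightarrow> K y \<le> g3 y"
  proof -
    fix y :: real assume y: "0 < y"
    have "exp (- G y) \<le> 1" using Gnn[OF y] by simp
    moreover have "0 \<le> y ^ 3 * d2 y" using pos[OF y] y by simp
    ultimately show "K y \<le> g3 y" unfolding K_def g3_def by (rule divide_right_mono)
  qed
  have Kpos: "\<And>y. 0 < y \<Longrightarrow> K y \<ge> 0"
  proof -
    fix y :: real assume y: "0 < y"
    have "0 < y ^ 3 * d2 y" using pos[OF y] y by simp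
    then show "K y \<ge> 0" unfolding K_def by simp
  qed
  have Kcont: "\<And>y. y > 0 \<Longrightarrow> isCont K y"
    unfolding K_def using cd2 d2nz Gcont by (intro continuous_intros) auto
  have g3cont: "\<And>y. y > 0 \<Longrightarrow> isCont g3 y"
    unfolding g3_def using cd2 d2nz by (intro continuous_intros) auto
  have Kint: "\<And>c. c > 0 \<Longrightarrow> K integrable_on {c..}"
  proof -
    fix c :: real assume c: "c > 0"
    show "K integrable_on {c..}"
    proof (rule tail_integrable[where a=a and M=M])
      show "continuous_on {c..} K" using c Kcont by (intro continuous_at_imp_continuous_on) auto
      fix y assume "c \<le> y"
      then have y: "0 < y" using c by linarith
      show "\<bar>K y\<bar> \<le> M * y powr (-1-a)" using Kpos[OF y] Kle[OF y] g3bnd[OF y] by (smt (verit))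
    qed (use c a M in auto)
  qed
  have g3int: "\<And>c. c > 0 \<Longrightarrow> g3 integrable_on {c..}"
  proof -
    fix c :: real assume c: "c > 0"
    show "g3 integrable_on {c..}"
    proof (rule tail_integrable[where a=a and M=M])
      show "continuous_on {c..} g3" using c g3cont by (intro continuous_at_imp_continuous_on) auto
      fix y assume "c \<le> y"
      then have y: "0 < y" using c by linarith
      show "\<bar>g3 y\<bar> \<le> M * y powr (-1-a)" using g3pos[OF y] g3bnd[OF y] by (smt (verit))
    qed (use c a M in auto)
  qed
  have Ksplit: "\<And>c u. 0 < c \<Longrightarrow> c \<le> u \<Longrightarrow> integral {c..} K = integral {c..u} K + integral {u..} K"
  proof -
    fix c u :: real assume cu: "0 < c" "c \<le> u"
    have i1: "K integrable_on {c..u}"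
      by (rule integrable_on_subinterval[OF Kint[of c]]) (use cu in auto)
    have i2: "K integrable_on {u..}" using Kint cu by auto
    have "(K has_integral (integral {c..u} K + integral {u..} K)) ({c..u} \<union> {u..})"
      by (rule has_integral_Un[OF integrable_integral[OF i1] integrable_integral[OF i2]])
         (use cu in \<open>auto intro: negligible_subset[of "{u}"]\<close>)
    moreover have "{c..u} \<union> {u..} = {c..}" using cu by auto
    ultimately show "integral {c..} K = integral {c..u} K + integral {u..} K"
      by (simp add: integral_unique)
  qed
  have Id: "\<And>t. t > 0 \<Longrightarrow> ((\<lambda>u. integral {u..} K) has_real_derivative - K t) (at t)"
  proof -
    fix t :: real assume t: "t > 0"
    have "((\<lambda>u. integral {u..} K) has_real_derivative (-1) * K t) (at t)"
    proof (rule deriv_from_integral[where c="t/2" and b="2*t" and A="integral {t/2..} K"])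
      show "continuous_on {t/2..2*t} K"
        using t Kcont by (intro continuous_at_imp_continuous_on) auto
      fix u assume u: "u \<in> {t/2<..<2*t}"
      show "integral {u..} K = integral {t/2..} K + (-1) * integral {t/2..u} K"
        using Ksplit[of "t/2" u] u t by auto
    qed (use t in auto)
    then show "((\<lambda>u. integral {u..} K) has_real_derivative - K t) (at t)" by simp
  qed
  define DXv where "DXv = (\<lambda>t. Xe t / t + h t * Xe t + 1 / (t\<^sup>2 * d2 t))"
  have DX: "\<And>t. t > 0 \<Longrightarrow> (Xe has_real_derivative DXv t) (at t)"
  proof -
    fix t :: real assume t: "t > 0"
    have m: "((\<lambda>u. - u) has_real_derivative -1) (at t)"
      by (auto intro!: derivative_eq_intros)
    have e: "((\<lambda>u. exp (G u)) has_real_derivative exp (G t) * h t) (at t)"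
      by (rule DERIV_fun_exp[OF Gd[OF t]])
    have "(Xe has_real_derivative ((-1) * exp (G t) + exp (G t) * h t * (- t)) * integral {t..} K + (- K t) * (- t * exp (G t))) (at t)"
      unfolding Xe_def by (rule DERIV_mult[OF DERIV_mult[OF m e] Id[OF t]])
    moreover have "((-1) * exp (G t) + exp (G t) * h t * (- t)) * integral {t..} K + (- K t) * (- t * exp (G t)) = DXv t"
    proof -
      have "K t * (t * exp (G t)) = 1 / (t\<^sup>2 * d2 t)"
        unfolding K_def using t pos[OF t] by (simp add: exp_minus field_simps power2_eq_square power3_eq_cube)
      then show ?thesis unfolding DXv_def Xe_def using t by (simp add: field_simps)
    qed
    ultimately show "(Xe has_real_derivative DXv t) (at t)" by simp
  qed
  have dXe: "\<And>t. t > 0 \<Longrightarrow> deriv Xe t = DXv t" using DX DERIV_imp_deriv by blast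
  define L where "L = (d3 s * s + d2 s) / (d2 s * s)"
  have Ld: "deriv (\<lambda>t. ln (d2 t * t)) s = L"
  proof (rule DERIV_imp_deriv)
    show "((\<lambda>t. ln (d2 t * t)) has_real_derivative L) (at s)"
      unfolding L_def using D2[OF s] pos[OF s] s by (auto intro!: derivative_eq_intros simp: field_simps)
  qed
  define E where "E = (2 * \<eta> * DXv s - (1 + 2 * \<eta> * Xe s) * L) / (d2 s * s\<^sup>2)"
  have DDX: "(DXv has_real_derivative E) (at s)"
  proof -
    have sne: "s \<noteq> 0" using s by simp
    have xx: "DXv s = Xe s / s + 2 * \<eta> / (s\<^sup>2 * d2 s) * Xe s + 1 / (s\<^sup>2 * d2 s)"
      unfolding DXv_def h_def by simp
    have "((\<lambda>t. Xe t / t + 2 * \<eta> / (t\<^sup>2 * d2 t) * Xe t + 1 / (t\<^sup>2 * d2 t)) has_real_derivative E) (at s)"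
      using ddx_generic[OF DX[OF s] D2[OF s] sne d2nz[OF s], where \<eta>=\<eta>]
      unfolding E_identity[OF sne d2nz[OF s] xx] E_def L_def .
    moreover have "DXv = (\<lambda>t. Xe t / t + 2 * \<eta> / (t\<^sup>2 * d2 t) * Xe t + 1 / (t\<^sup>2 * d2 t))"
      unfolding DXv_def h_def by simp
    ultimately show ?thesis by simp
  qed
  have DDX': "(deriv Xe has_real_derivative E) (at s)"
    by (rule has_field_derivative_transform_within_open[OF DDX, where S="{0<..}"])
       (use s dXe in auto)
  have dd: "deriv (deriv Xe) s = E" using DDX' DERIV_imp_deriv by blast
  have I0: "integral {s..} K \<ge> 0" using Kint[OF s] Kpos s by (intro integral_nonneg) auto
  have J0: "integral {s..} g3 \<ge> 0" using g3int[OF s] g3pos s by (intro integral_nonneg less_imp_le) auto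
  have cmp: "exp (G s) * integral {s..} K \<le> integral {s..} g3"
  proof -
    have "exp (G s) * integral {s..} K = integral {s..} (\<lambda>y. exp (G s) * K y)"
      by (rule integral_mult[OF Kint[OF s]])
    also have "\<dots> \<le> integral {s..} g3"
    proof (rule integral_le)
      show "(\<lambda>y. exp (G s) * K y) integrable_on {s..}" by (rule integrable_on_mult_right[OF Kint[OF s]])
      show "g3 integrable_on {s..}" by (rule g3int[OF s])
      fix y assume "y \<in> {s..}"
      then have y: "0 < y" "s \<le> y" using s by auto
      have "exp (G s) * K y = exp (G s - G y) * g3 y"
        unfolding K_def g3_def by (simp add: exp_diff exp_minus field_simps)
      also have "\<dots> \<le> 1 * g3 y" using Gmono[OF s y(2)] g3pos[OF y(1)] by (intro mult_right_mono) auto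
      finally show "exp (G s) * K y \<le> g3 y" by simp
    qed
    finally show ?thesis .
  qed
  have absXe: "\<bar>Xe s\<bar> \<le> \<bar>X s\<bar>"
  proof -
    have "\<bar>Xe s\<bar> = s * (exp (G s) * integral {s..} K)" unfolding Xe_def using s I0 by (simp add: abs_mult)
    also have "\<dots> \<le> s * integral {s..} g3" using cmp s by (intro mult_left_mono) auto
    also have "\<dots> = \<bar>X s\<bar>" unfolding X_def using s J0 by (simp add: abs_mult)
    finally show ?thesis .
  qed
  define q where "q = 1 / (s\<^sup>2 * d2 s)"
  have q: "q > 0" unfolding q_def using pos[OF s] s by simp
  have DXvs: "DXv s = Xe s / s + 2 * \<eta> * q * Xe s + q" unfolding DXv_def h_def q_def by simp
  have t1: "\<bar>Xe s / s\<bar> \<le> \<bar>X s\<bar> / s" using absXe s by (simp add: divide_right_mono)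
  have t2: "\<bar>2 * \<eta> * q * Xe s\<bar> \<le> 2 * \<eta> * q * \<bar>X s\<bar>"
    using absXe q eta by (simp add: abs_mult mult_left_mono)
  have b1: "\<bar>DXv s\<bar> \<le> \<bar>X s\<bar> / s + 1 / (s\<^sup>2 * d2 s) + 2 * \<eta> * \<bar>X s\<bar> / (s\<^sup>2 * d2 s)"
  proof -
    have "2 * \<eta> * \<bar>X s\<bar> / (s\<^sup>2 * d2 s) = 2 * \<eta> * q * \<bar>X s\<bar>" unfolding q_def by simp
    then show ?thesis unfolding DXvs using t1 t2 q by (fold q_def) (smt (verit))
  qed
  have Eeq: "E * d2 s * s\<^sup>2 = 2 * \<eta> * DXv s - (1 + 2 * \<eta> * Xe s) * L"
    unfolding E_def using s d2nz[OF s] by (simp add: field_simps)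
  have t3: "\<bar>(1 + 2 * \<eta> * Xe s) * L\<bar> \<le> (1 + 2 * \<eta> * \<bar>X s\<bar>) * \<bar>L\<bar>"
  proof -
    have "\<bar>1 + 2 * \<eta> * Xe s\<bar> \<le> 1 + 2 * \<eta> * \<bar>X s\<bar>"
    proof -
      have "\<bar>2 * \<eta> * Xe s\<bar> = 2 * \<eta> * \<bar>Xe s\<bar>" using eta by (simp add: abs_mult)
      also have "\<dots> \<le> 2 * \<eta> * \<bar>X s\<bar>" using absXe eta by (intro mult_left_mono) auto
      finally show ?thesis by (smt (verit))
    qed
    then show ?thesis by (simp add: abs_mult mult_right_mono)
  qed
  have b2: "\<bar>E * d2 s * s\<^sup>2\<bar> \<le> 2 * \<eta> * \<bar>DXv s\<bar> + (1 + 2 * \<eta> * \<bar>X s\<bar>) * \<bar>L\<bar>"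
  proof -
    have "\<bar>2 * \<eta> * DXv s\<bar> = 2 * \<eta> * \<bar>DXv s\<bar>" using eta by (simp add: abs_mult)
    then show ?thesis unfolding Eeq
      using abs_triangle_ineq4[of "2 * \<eta> * DXv s" "(1 + 2 * \<eta> * Xe s) * L"] t3 by linarith
  qed
  show ?thesis
    using b1 b2 absXe dd Ld dXe[OF s] DX[OF s] DDX' unfolding real_differentiable_def by auto
qed

theorem proposition3p1:
  fixes f :: "real \<Rightarrow> real" and \<alpha> \<beta> \<kappa> Kinf L \<eta> s :: real
  assumes "hypothesis2 f \<alpha> \<beta> \<kappa> Kinf L"
    and "0 < \<eta>" and "\<eta> \<le> 1" and "0 < s"
  shows "xi_eta f \<eta> differentiable (at s) \<and>
         deriv (xi_eta f \<eta>) differentiable (at s) \<and>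
         \<bar>xi_eta f \<eta> s\<bar> \<le> \<bar>xi f s\<bar> \<and>
         \<bar>deriv (xi_eta f \<eta>) s\<bar> \<le> \<bar>xi f s\<bar> / s + 1 / (s\<^sup>2 * dk 2 f s)
           + 2 * \<eta> * \<bar>xi f s\<bar> / (s\<^sup>2 * dk 2 f s) \<and>
         \<bar>deriv (deriv (xi_eta f \<eta>)) s * dk 2 f s * s\<^sup>2\<bar>
           \<le> 2 * \<eta> * \<bar>deriv (xi_eta f \<eta>) s\<bar>
             + (1 + 2 * \<eta> * \<bar>xi f s\<bar>) * \<bar>deriv (\<lambda>t. ln (dk 2 f t * t)) s\<bar>"
proof -
  have hyp: "0 < \<alpha>" "\<alpha> < 1" "0 < \<kappa>"
    and all: "\<forall>k<4. \<forall>s>0. (dk k f has_real_derivative dk (Suc k) f s) (at s)"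
    and pos: "\<forall>s>0. dk 2 f s > 0"
    and I2: "\<forall>s>0. s powr \<alpha> / (\<alpha> * \<kappa>) \<le> s\<^sup>2 * dk 2 f s"
    using assms(1) unfolding hypothesis2_def C4beta_loc_def by auto
  have D2: "(dk 2 f has_real_derivative dk 3 f t) (at t)" if t: "t > 0" for t
  proof -
    have "(dk 2 f has_real_derivative dk (Suc 2) f t) (at t)"
    proof -
      have "(2::nat) < 4" by simp
      from all[rule_format, OF this t] show ?thesis .
    qed
    moreover have "Suc 2 = (3::nat)" by simp
    ultimately show ?thesis by metis
  qed
  have bnd: "1 / (t\<^sup>2 * dk 2 f t) \<le> (\<alpha> * \<kappa>) * t powr (- \<alpha>)" if t: "t > 0" for t
  proof -
    have p: "0 < t powr \<alpha> / (\<alpha> * \<kappa>)" using t hyp by simp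
    have "1 / (t\<^sup>2 * dk 2 f t) \<le> 1 / (t powr \<alpha> / (\<alpha> * \<kappa>))"
    proof (rule divide_left_mono)
      show "t powr \<alpha> / (\<alpha> * \<kappa>) \<le> t\<^sup>2 * dk 2 f t" using I2 t by blast
      have "0 < t\<^sup>2 * dk 2 f t" using pos t by simp
      then show "0 < t\<^sup>2 * dk 2 f t * (t powr \<alpha> / (\<alpha> * \<kappa>))" using p by (rule mult_pos_pos)
    qed simp
    also have "\<dots> = (\<alpha> * \<kappa>) * t powr (- \<alpha>)" using t by (simp add: powr_minus field_simps)
    finally show ?thesis .
  qed
  have M: "0 \<le> \<alpha> * \<kappa>" using hyp by simp
  note R = main_lemma[OF D2 pos[rule_format] bnd hyp(1,2) M assms(2) assms(4)]
  have e1: "xi_eta f \<eta> = (\<lambda>s. - s * exp (integral {0..s} (\<lambda>y. 2 * \<eta> / (y\<^sup>2 * dk 2 f y)))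
       * integral {s..} (\<lambda>y. exp (- integral {0..y} (\<lambda>z. 2 * \<eta> / (z\<^sup>2 * dk 2 f z)))
                              / (y ^ 3 * dk 2 f y)))"
    by (rule ext) (simp only: xi_eta_def)
  have e2: "xi f s = - s * integral {s..} (\<lambda>y. 1 / (y ^ 3 * dk 2 f y))"
    by (simp only: xi_def)
  show ?thesis unfolding e1 e2 using R pos by blast
qed

end
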